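(* In the setting of the context (QFSR scheme: quadratic flux reconstruction in the solution), let $\mathcal{E}_j=(\Phi_{j+1/2}-\Phi_{j-1/2})/h$ evaluated on exact nodal values. If $\kappa_3=0$, then as $h\to0$ with derivatives at $x_j$, $$\mathcal{E}_j=\frac{\partial f}{\partial x}+\frac14\left[\Big(\kappa-\frac13\Big)\frac{\partial f}{\partial u}\frac{\partial^3u}{\partial x^3}+(\kappa+\theta_2-1)\frac{\partial^2 f}{\partial u^2}\frac{\partial u}{\partial x}\frac{\partial^2u}{\partial x^2}+\frac12\Big(\theta_2-\frac23\Big)\frac{\partial^3 f}{\partial u^3}\Big(\frac{\partial u}{\partial x}\Big)^3\right]h^2-\frac{\kappa-1}{8}\left[\frac{\partial D}{\partial x}\frac{\partial^3 u}{\partial x^3}+D(u(x_j))\frac{\partial^4 u}{\partial x^4}\right]h^3+O(h^4),$$ where $f$ denotes $f(u(x))$, $f$-derivatives in $u$ are evaluated at $u(x_j)$, and $\partial D/\partial x=\frac{d}{dx}D(u(x))$. In particular, $\kappa=1/3$ and $\theta_2=2/3$ give third-order accuracy.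
   Context: Let $h>0$, uniform grid $x_i=ih$, $i\in\mathbb{Z}$. Let $u$ be a smooth real function of $x$, $u_i=u(x_i)$; let $f$ (flux) and $D$ (dissipation coefficient) be smooth real functions of one variable. Define successive central differences $(u_x)_i=(u_{i+1}-u_{i-1})/(2h)$, $(u_{xx})_i=((u_x)_{i+1}-(u_x)_{i-1})/(2h)$. For the face $i+1/2$ with $j=i$, $k=i+1$, let $T_j=\frac h4((u_x)_k-(u_x)_j)-\frac{h^2}{4}(u_{xx})_j$, $T_k=\frac h4((u_x)_k-(u_x)_j)-\frac{h^2}{4}(u_{xx})_k$, and reconstructed states (parameters $\kappa,\kappa_3$) $u_L=\kappa\frac{u_j+u_k}{2}+(1-\kappa)[u_j+\frac h2(u_x)_j]+\kappa_3T_j$, $u_R=\kappa\frac{u_j+u_k}{2}+(1-\kappa)[u_k-\frac h2(u_x)_k]+\kappa_3T_k$. With $\Delta_L=u_L-u_j$, $\Delta_R=u_R-u_k$ and parameter $\theta_2$, the reconstructed fluxes are $f_L=f(u_j)+f'(u_j)\Delta_L+\frac{\theta_2}{2}f''(u_j)\Delta_L^2$ and $f_R=f(u_k)+f'(u_k)\Delta_R+\frac{\theta_2}{2}f''(u_k)\Delta_R^2$. Numerical flux: $\Phi_{i+1/2}=\frac12(f_L+f_R)-\frac12D_{i+1/2}(u_R-u_L)$, with $D_{i+1/2}=\bar D(u_i,u_{i+1})$ for a smooth symmetric $\bar D$ with $\bar D(v,v)=D(v)$. *)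

theory Defs
  imports "HOL-Analysis.Analysis" "HOL-Library.Landau_Symbols"
begin

fun Ck :: "nat \<Rightarrow> ('a::real_normed_vector \<Rightarrow> real) \<Rightarrow> bool" where
  "Ck 0 g = continuous_on UNIV g"
| "Ck (Suc k) g = (\<exists>g'. (\<forall>x. (g has_derivative g' x) (at x)) \<and> (\<forall>v. Ck k (\<lambda>x. g' x v)))"

definition smooth_fun :: "('a::real_normed_vector \<Rightarrow> real) \<Rightarrow> bool" where
  "smooth_fun g = (\<forall>k. Ck k g)"

definition cdx :: "real \<Rightarrow> (real \<Rightarrow> real) \<Rightarrow> real \<Rightarrow> real" where
  "cdx h u y = (u (y + h) - u (y - h)) / (2 * h)"

definition cdxx :: "real \<Rightarrow> (real \<Rightarrow> real) \<Rightarrow> real \<Rightarrow> real" where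
  "cdxx h u y = (cdx h u (y + h) - cdx h u (y - h)) / (2 * h)"

text \<open>QFSR numerical flux at the face between nodes y (= x_j) and y + h (= x_k).\<close>
definition qfsr_flux ::
  "real \<Rightarrow> real \<Rightarrow> real \<Rightarrow> (real \<Rightarrow> real) \<Rightarrow> (real \<times> real \<Rightarrow> real)
    \<Rightarrow> real \<Rightarrow> (real \<Rightarrow> real) \<Rightarrow> real \<Rightarrow> real" where
  "qfsr_flux \<kappa> \<kappa>3 \<theta>2 f Dbar h u y =
    (let uj = u y; uk = u (y + h);
         Tj = h / 4 * (cdx h u (y + h) - cdx h u y) - h^2 / 4 * cdxx h u y;
         Tk = h / 4 * (cdx h u (y + h) - cdx h u y) - h^2 / 4 * cdxx h u (y + h);
         uL = \<kappa> * (uj + uk) / 2 + (1 - \<kappa>) * (uj + h / 2 * cdx h u y) + \<kappa>3 * Tj;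
         uR = \<kappa> * (uj + uk) / 2 + (1 - \<kappa>) * (uk - h / 2 * cdx h u (y + h)) + \<kappa>3 * Tk;
         dL = uL - uj; dR = uR - uk;
         fL = f uj + deriv f uj * dL + \<theta>2 / 2 * deriv (deriv f) uj * dL^2;
         fR = f uk + deriv f uk * dR + \<theta>2 / 2 * deriv (deriv f) uk * dR^2
     in (fL + fR) / 2 - Dbar (uj, uk) / 2 * (uR - uL))"

text \<open>Truncation error E_j at node x (faces x +- h/2).\<close>
definition qfsr_err ::
  "real \<Rightarrow> real \<Rightarrow> real \<Rightarrow> (real \<Rightarrow> real) \<Rightarrow> (real \<times> real \<Rightarrow> real)
    \<Rightarrow> (real \<Rightarrow> real) \<Rightarrow> real \<Rightarrow> real \<Rightarrow> real" where
  "qfsr_err \<kappa> \<kappa>3 \<theta>2 f Dbar u x h =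
    (qfsr_flux \<kappa> \<kappa>3 \<theta>2 f Dbar h u x - qfsr_flux \<kappa> \<kappa>3 \<theta>2 f Dbar h u (x - h)) / h"

end

theory Submission
  imports Defs
begin

fun C :: "nat \<Rightarrow> (real \<Rightarrow> real) \<Rightarrow> bool" where
  "C 0 g = True"
| "C (Suc n) g = ((\<forall>x. (g has_real_derivative deriv g x) (at x)) \<and> C n (deriv g))"

definition sm :: "(real \<Rightarrow> real) \<Rightarrow> bool" where "sm g = (\<forall>n. C n g)"

lemma C_down: "C (Suc n) g \<Longrightarrow> C n g"
  by (induction n arbitrary: g) auto

lemma C_const: "C n (\<lambda>t. c)"
proof (induction n arbitrary: c)
  case (Suc n)
  have "deriv (\<lambda>t. c) = (\<lambda>t. 0::real)" by (rule ext) simp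
  then show ?case using Suc by (auto intro: derivative_eq_intros)
qed simp

lemma C_id: "C n (\<lambda>t. t)"
proof (cases n)
  case (Suc m)
  have "deriv (\<lambda>t. t) = (\<lambda>t. 1::real)" by (rule ext) simp
  then show ?thesis using Suc C_const by (auto intro: derivative_eq_intros)
qed simp

lemma C_add: "C n A \<Longrightarrow> C n B \<Longrightarrow> C n (\<lambda>t. A t + B t)"
proof (induction n arbitrary: A B)
  case (Suc n)
  have dA: "\<And>x. (A has_real_derivative deriv A x) (at x)" and dB: "\<And>x. (B has_real_derivative deriv B x) (at x)"
    using Suc.prems by auto
  have d: "\<And>x. ((\<lambda>t. A t + B t) has_real_derivative deriv A x + deriv B x) (at x)"
    using dA dB by (rule DERIV_add)
  hence "deriv (\<lambda>t. A t + B t) = (\<lambda>x. deriv A x + deriv B x)"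
    by (intro ext DERIV_imp_deriv)
  then show ?case using d Suc by auto
qed simp

lemma C_mult: "C n A \<Longrightarrow> C n B \<Longrightarrow> C n (\<lambda>t. A t * B t)"
proof (induction n arbitrary: A B)
  case (Suc n)
  have dA: "\<And>x. (A has_real_derivative deriv A x) (at x)" and dB: "\<And>x. (B has_real_derivative deriv B x) (at x)"
    using Suc.prems by auto
  have d: "\<And>x. ((\<lambda>t. A t * B t) has_real_derivative deriv A x * B x + A x * deriv B x) (at x)"
    using dA dB by (auto intro!: derivative_eq_intros)
  hence e: "deriv (\<lambda>t. A t * B t) = (\<lambda>x. deriv A x * B x + A x * deriv B x)"
    by (intro ext DERIV_imp_deriv)
  have "C n (\<lambda>x. deriv A x * B x + A x * deriv B x)"
    using Suc C_down[of n A] C_down[of n B] by (intro C_add) auto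
  then show ?case using d e by auto
qed simp

lemma C_comp: "C n G \<Longrightarrow> C n W \<Longrightarrow> C n (\<lambda>t. G (W t))"
proof (induction n arbitrary: G W)
  case (Suc n)
  have dG: "\<And>x. (G has_real_derivative deriv G x) (at x)" and dW: "\<And>x. (W has_real_derivative deriv W x) (at x)"
    using Suc.prems by auto
  have d: "\<And>x. ((\<lambda>t. G (W t)) has_real_derivative deriv G (W x) * deriv W x) (at x)"
    using DERIV_chain2[OF dG dW] by simp
  hence e: "deriv (\<lambda>t. G (W t)) = (\<lambda>x. deriv G (W x) * deriv W x)"
    by (intro ext DERIV_imp_deriv)
  have "C n (\<lambda>x. deriv G (W x) * deriv W x)"
    using Suc C_down[of n W] by (intro C_mult) auto
  then show ?case using d e by auto
qed simp

lemma sm_const[simp]: "sm (\<lambda>t. c)" by (simp add: sm_def C_const)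
lemma sm_id[simp]: "sm (\<lambda>t. t)" by (simp add: sm_def C_id)
lemma sm_add[simp]: "sm A \<Longrightarrow> sm B \<Longrightarrow> sm (\<lambda>t. A t + B t)" by (simp add: sm_def C_add)
lemma sm_mult[simp]: "sm A \<Longrightarrow> sm B \<Longrightarrow> sm (\<lambda>t. A t * B t)" by (simp add: sm_def C_mult)
lemma sm_comp: "sm G \<Longrightarrow> sm W \<Longrightarrow> sm (\<lambda>t. G (W t))" by (simp add: sm_def C_comp)
lemma sm_diff[simp]: "sm A \<Longrightarrow> sm B \<Longrightarrow> sm (\<lambda>t. A t - B t)"
proof -
  assume "sm A" "sm B"
  hence "sm (\<lambda>t. A t + (\<lambda>t. -1) t * B t)" by (intro sm_add sm_mult sm_const)
  thus ?thesis by simp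
qed
lemma sm_deriv[simp]: "sm G \<Longrightarrow> sm (deriv G)"
  unfolding sm_def by (metis C.simps(2))
lemma sm_DERIV: "sm G \<Longrightarrow> (G has_real_derivative deriv G x) (at x)"
  unfolding sm_def by (metis C.simps(2))

lemma sm_iter: "sm G \<Longrightarrow> ((deriv ^^ n) G has_real_derivative (deriv ^^ Suc n) G x) (at x)"
proof (induction n arbitrary: G)
  case 0 then show ?case by (simp add: sm_DERIV)
next
  case (Suc n)
  have "((deriv ^^ n) (deriv G) has_real_derivative (deriv ^^ Suc n) (deriv G) x) (at x)"
    using Suc by simp
  then show ?case by (simp only: funpow_Suc_right o_apply)
qed

lemma sm_iter_sm: "sm G \<Longrightarrow> sm ((deriv ^^ n) G)"
  by (induction n) auto

lemma Ck_C: "Ck k (g :: real \<Rightarrow> real) \<Longrightarrow> C k g"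
proof (induction k arbitrary: g)
  case (Suc k)
  then obtain g' where g': "\<And>x. (g has_derivative g' x) (at x)" "\<And>v. Ck k (\<lambda>x. g' x v)" by auto
  have lin: "\<And>x s. g' x s = s * g' x 1"
  proof -
    fix x s
    have "linear (g' x)" using has_derivative_linear[OF g'(1)] .
    then have "g' x (s *\<^sub>R 1) = s *\<^sub>R g' x 1" by (rule linear_scale)
    thus "g' x s = s * g' x 1" by simp
  qed
  have d: "\<And>x. (g has_real_derivative g' x 1) (at x)"
    unfolding has_field_derivative_def
    using g'(1) lin by (metis (no_types, lifting) ext mult.commute)
  hence e: "deriv g = (\<lambda>x. g' x 1)" by (intro ext DERIV_imp_deriv)
  show ?case using d e Suc.IH[OF g'(2)] by auto
qed simp

lemma smooth_sm: "smooth_fun (g :: real \<Rightarrow> real) \<Longrightarrow> sm g"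
  unfolding smooth_fun_def sm_def using Ck_C by blast


lemma Ck2_C: "Ck k (G :: real \<times> real \<Rightarrow> real) \<Longrightarrow> sm w1 \<Longrightarrow> sm w2 \<Longrightarrow> C k (\<lambda>t. G (w1 t, w2 t))"
proof (induction k arbitrary: G)
  case (Suc k)
  then obtain G' where G': "\<And>p. (G has_derivative G' p) (at p)" "\<And>v. Ck k (\<lambda>p. G' p v)" by auto
  define H where "H = (\<lambda>t. deriv w1 t * G' (w1 t, w2 t) (1,0) + deriv w2 t * G' (w1 t, w2 t) (0,1))"
  have d: "((\<lambda>t. G (w1 t, w2 t)) has_real_derivative H t) (at t)" for t
  proof -
    have p: "((\<lambda>t. (w1 t, w2 t)) has_derivative (\<lambda>s. (deriv w1 t * s, deriv w2 t * s))) (at t)"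
      using sm_DERIV[OF Suc.prems(2), of t] sm_DERIV[OF Suc.prems(3), of t]
      unfolding has_field_derivative_def by (intro has_derivative_Pair)
    have c: "((\<lambda>t. G (w1 t, w2 t)) has_derivative (\<lambda>s. G' (w1 t, w2 t) (deriv w1 t * s, deriv w2 t * s))) (at t)"
      using has_derivative_compose[OF p G'(1)] by simp
    have lin: "linear (G' (w1 t, w2 t))" using has_derivative_linear[OF G'(1)] .
    have eq: "G' (w1 t, w2 t) (deriv w1 t * s, deriv w2 t * s) = H t * s" for s
    proof -
      have "G' (w1 t, w2 t) (deriv w1 t * s, deriv w2 t * s) = G' (w1 t, w2 t) ((deriv w1 t * s) *\<^sub>R (1,0) + (deriv w2 t * s) *\<^sub>R (0,1))"
        by simp
      also have "\<dots> = (deriv w1 t * s) * G' (w1 t, w2 t) (1,0) + (deriv w2 t * s) * G' (w1 t, w2 t) (0,1)"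
        by (simp only: linear_add[OF lin] linear_scale[OF lin] real_scaleR_def)
      finally have "G' (w1 t, w2 t) (deriv w1 t * s, deriv w2 t * s)
         = (deriv w1 t * s) * G' (w1 t, w2 t) (1,0) + (deriv w2 t * s) * G' (w1 t, w2 t) (0,1)" .
      thus ?thesis unfolding H_def by (simp add: algebra_simps)
    qed
    have "(\<lambda>s. G' (w1 t, w2 t) (deriv w1 t * s, deriv w2 t * s)) = (*) (H t)"
      by (rule ext) (simp add: eq)
    then show ?thesis unfolding has_field_derivative_def using c by simp
  qed
  hence e: "deriv (\<lambda>t. G (w1 t, w2 t)) = H" by (intro ext DERIV_imp_deriv)
  have "C k H"
    unfolding H_def
    using Suc.IH[OF G'(2)] Suc.prems(2,3) sm_deriv
    by (intro C_add C_mult) (auto simp: sm_def)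
  then show ?case using d e by auto
qed simp

lemma sm2: "smooth_fun (G :: real \<times> real \<Rightarrow> real) \<Longrightarrow> sm w1 \<Longrightarrow> sm w2 \<Longrightarrow> sm (\<lambda>t. G (w1 t, w2 t))"
  unfolding smooth_fun_def sm_def using Ck2_C by (metis sm_def)

lemma taylor_bound:
  assumes "sm G"
  shows "\<exists>M r. r > 0 \<and> (\<forall>h. \<bar>h\<bar> < r \<longrightarrow>
     \<bar>G h - (\<Sum>m<n. (deriv ^^ m) G 0 / fact m * h ^ m)\<bar> \<le> M * \<bar>h\<bar> ^ n)"
proof -
  have cont: "continuous_on (cball 0 1) ((deriv ^^ n) G)"
    by (meson DERIV_continuous assms continuous_at_imp_continuous_on sm_iter)
  have "compact ((deriv ^^ n) G ` cball 0 1)"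
    by (rule compact_continuous_image[OF cont compact_cball])
  then obtain B where B: "\<And>y. y \<in> cball 0 1 \<Longrightarrow> \<bar>(deriv ^^ n) G y\<bar> \<le> B"
    using compact_imp_bounded bounded_iff by (metis image_eqI real_norm_def)
  have "\<bar>G h - (\<Sum>m<n. (deriv ^^ m) G 0 / fact m * h ^ m)\<bar> \<le> B / fact n * \<bar>h\<bar> ^ n"
    if "\<bar>h\<bar> < 1" for h
  proof -
    obtain t where t: "\<bar>t\<bar> \<le> \<bar>h\<bar>"
      "G h = (\<Sum>m<n. (deriv ^^ m) G 0 / fact m * h ^ m) + (deriv ^^ n) G t / fact n * h ^ n"
      using Maclaurin_all_le[where diff="\<lambda>m. (deriv ^^ m) G" and f=G and x=h and n=n] sm_iter[OF assms] by auto
    have "\<bar>(deriv ^^ n) G t\<bar> \<le> B" using B t(1) that by auto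
    hence "\<bar>(deriv ^^ n) G t / fact n * h ^ n\<bar> \<le> B / fact n * \<bar>h\<bar> ^ n"
      by (simp add: abs_mult power_abs divide_right_mono mult_right_mono)
    thus ?thesis using t(2) by simp
  qed
  thus ?thesis by (intro exI[of _ "B / fact n"] exI[of _ 1]) auto
qed

lemma taylor_odd:
  assumes "sm G"
  shows "\<exists>M r. r > 0 \<and> (\<forall>h. \<bar>h\<bar> < r \<longrightarrow>
     \<bar>G h - G (-h) - 2 * (deriv G 0 * h + deriv (deriv (deriv G)) 0 / 6 * h ^ 3)\<bar> \<le> M * \<bar>h\<bar> ^ 5)"
proof -
  obtain M r where Mr: "r > 0" "\<And>h. \<bar>h\<bar> < r \<Longrightarrow>
     \<bar>G h - (\<Sum>m<5. (deriv ^^ m) G 0 / fact m * h ^ m)\<bar> \<le> M * \<bar>h\<bar> ^ 5"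
    using taylor_bound[OF assms, where n=5] by auto
  have "\<bar>G h - G (-h) - 2 * (deriv G 0 * h + deriv (deriv (deriv G)) 0 / 6 * h ^ 3)\<bar> \<le> (2*M) * \<bar>h\<bar> ^ 5"
    if "\<bar>h\<bar> < r" for h
  proof -
    have a: "\<bar>G h - (\<Sum>m<5. (deriv ^^ m) G 0 / fact m * h ^ m)\<bar> \<le> M * \<bar>h\<bar> ^ 5" using Mr that by auto
    have b: "\<bar>G (-h) - (\<Sum>m<5. (deriv ^^ m) G 0 / fact m * (-h) ^ m)\<bar> \<le> M * \<bar>h\<bar> ^ 5" using Mr(2)[of "-h"] that by auto
    have s: "(\<Sum>m<5. (deriv ^^ m) G 0 / fact m * h ^ m) - (\<Sum>m<5. (deriv ^^ m) G 0 / fact m * (-h) ^ m)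
       = 2 * (deriv G 0 * h + deriv (deriv (deriv G)) 0 / 6 * h ^ 3)"
      by (simp add: eval_nat_numeral fact_numeral algebra_simps)
    show ?thesis using a b s by linarith
  qed
  thus ?thesis using Mr(1) by blast
qed

lemma taylor_even:
  assumes "sm G"
  shows "\<exists>M r. r > 0 \<and> (\<forall>h. \<bar>h\<bar> < r \<longrightarrow>
     \<bar>G h + G (-h) - 2 * (G 0 + deriv (deriv G) 0 / 2 * h ^ 2 + deriv (deriv (deriv (deriv G))) 0 / 24 * h ^ 4)\<bar> \<le> M * \<bar>h\<bar> ^ 5)"
proof -
  obtain M r where Mr: "r > 0" "\<And>h. \<bar>h\<bar> < r \<Longrightarrow>
     \<bar>G h - (\<Sum>m<5. (deriv ^^ m) G 0 / fact m * h ^ m)\<bar> \<le> M * \<bar>h\<bar> ^ 5"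
    using taylor_bound[OF assms, where n=5] by auto
  have "\<bar>G h + G (-h) - 2 * (G 0 + deriv (deriv G) 0 / 2 * h ^ 2 + deriv (deriv (deriv (deriv G))) 0 / 24 * h ^ 4)\<bar> \<le> (2*M) * \<bar>h\<bar> ^ 5"
    if "\<bar>h\<bar> < r" for h
  proof -
    have a: "\<bar>G h - (\<Sum>m<5. (deriv ^^ m) G 0 / fact m * h ^ m)\<bar> \<le> M * \<bar>h\<bar> ^ 5" using Mr that by auto
    have b: "\<bar>G (-h) - (\<Sum>m<5. (deriv ^^ m) G 0 / fact m * (-h) ^ m)\<bar> \<le> M * \<bar>h\<bar> ^ 5" using Mr(2)[of "-h"] that by auto
    have s: "(\<Sum>m<5. (deriv ^^ m) G 0 / fact m * h ^ m) + (\<Sum>m<5. (deriv ^^ m) G 0 / fact m * (-h) ^ m)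
       = 2 * (G 0 + deriv (deriv G) 0 / 2 * h ^ 2 + deriv (deriv (deriv (deriv G))) 0 / 24 * h ^ 4)"
      by (simp add: eval_nat_numeral fact_numeral algebra_simps)
    show ?thesis using a b s by linarith
  qed
  thus ?thesis using Mr(1) by blast
qed


definition sc :: "(real \<Rightarrow> real) \<Rightarrow> real \<Rightarrow> real \<Rightarrow> real \<Rightarrow> real" where "sc G x c t = G (x + c * t)"
definition cp :: "(real \<Rightarrow> real) \<Rightarrow> (real \<Rightarrow> real) \<Rightarrow> real \<Rightarrow> real" where "cp G W t = G (W t)"

lemma sm_sc[simp]: "sm G \<Longrightarrow> sm (sc G x c)"
proof -
  assume "sm G"
  moreover have "sm (\<lambda>t. x + c * t)" by (intro sm_add sm_mult sm_const sm_id)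
  ultimately have "sm (\<lambda>t. G (x + c * t))" by (rule sm_comp)
  thus ?thesis unfolding sc_def by (simp add: eta_contract_eq)
qed

lemma deriv_sc[simp]: "sm G \<Longrightarrow> deriv (sc G x c) = (\<lambda>t. c * sc (deriv G) x c t)"
proof (rule ext)
  fix t assume "sm G"
  have "((\<lambda>t. G (x + c * t)) has_real_derivative deriv G (x + c * t) * c) (at t)"
  proof (rule DERIV_chain2[OF sm_DERIV[OF \<open>sm G\<close>]])
    show "((\<lambda>t. x + c * t) has_real_derivative c) (at t)"
      by (auto intro!: derivative_eq_intros)
  qed
  thus "deriv (sc G x c) t = c * sc (deriv G) x c t"
    unfolding sc_def by (subst DERIV_imp_deriv) (auto simp: mult.commute)
qed

lemma sc0[simp]: "sc G x c 0 = G x" by (simp add: sc_def)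

lemma sm_cp[simp]: "sm G \<Longrightarrow> sm W \<Longrightarrow> sm (cp G W)"
  unfolding cp_def using sm_comp by (metis)

lemma deriv_cp[simp]: "sm G \<Longrightarrow> sm W \<Longrightarrow> deriv (cp G W) = (\<lambda>t. cp (deriv G) W t * deriv W t)"
proof (rule ext)
  fix t assume a: "sm G" "sm W"
  have "((\<lambda>t. G (W t)) has_real_derivative deriv G (W t) * deriv W t) (at t)"
    using DERIV_chain2[OF sm_DERIV[OF a(1)] sm_DERIV[OF a(2)]] .
  thus "deriv (cp G W) t = cp (deriv G) W t * deriv W t"
    unfolding cp_def by (subst DERIV_imp_deriv) auto
qed

lemma cp0[simp]: "cp G W 0 = G (W 0)" by (simp add: cp_def)

lemma deriv_const'[simp]: "deriv (\<lambda>t. c) = (\<lambda>t. 0::real)" by (rule ext) simp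

lemma deriv_add'[simp]: "sm A \<Longrightarrow> sm B \<Longrightarrow> deriv (\<lambda>t. A t + B t) = (\<lambda>t. deriv A t + deriv B t)"
  by (rule ext, rule DERIV_imp_deriv, intro DERIV_add sm_DERIV)

lemma deriv_diff'[simp]: "sm A \<Longrightarrow> sm B \<Longrightarrow> deriv (\<lambda>t. A t - B t) = (\<lambda>t. deriv A t - deriv B t)"
  by (rule ext, rule DERIV_imp_deriv, intro DERIV_diff sm_DERIV)

lemma deriv_mult'[simp]: "sm A \<Longrightarrow> sm B \<Longrightarrow> deriv (\<lambda>t. A t * B t) = (\<lambda>t. deriv A t * B t + A t * deriv B t)"
proof (rule ext)
  fix t assume a: "sm A" "sm B"
  show "deriv (\<lambda>t. A t * B t) t = deriv A t * B t + A t * deriv B t"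
    by (rule DERIV_imp_deriv) (use sm_DERIV[OF a(1)] sm_DERIV[OF a(2)] in \<open>auto intro!: derivative_eq_intros\<close>)
qed

lemma sm_divc[simp]: "sm A \<Longrightarrow> sm (\<lambda>t. A t / c)"
proof -
  assume "sm A"
  hence "sm (\<lambda>t. A t * (\<lambda>t. 1/c) t)" by (intro sm_mult sm_const)
  thus ?thesis by simp
qed

lemma sm_uminus[simp]: "sm A \<Longrightarrow> sm (\<lambda>t. - A t)"
proof -
  assume "sm A"
  hence "sm (\<lambda>t. (\<lambda>t. 0) t - A t)" by (intro sm_diff sm_const)
  thus ?thesis by simp
qed

lemma deriv_divc'[simp]: "sm A \<Longrightarrow> deriv (\<lambda>t. A t / c) = (\<lambda>t. deriv A t / c)"
proof (cases "c = 0")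
  case False
  assume "sm A"
  then show ?thesis using False
    by (intro ext DERIV_imp_deriv) (use sm_DERIV[of A] in \<open>auto intro!: derivative_eq_intros\<close>)
qed simp

lemma deriv_uminus'[simp]: "sm A \<Longrightarrow> deriv (\<lambda>t. - A t) = (\<lambda>t. - deriv A t)"
  by (rule ext, rule DERIV_imp_deriv) (use sm_DERIV[of A] in \<open>auto intro!: derivative_eq_intros\<close>)


lemma lin2: "linear (L :: real \<times> real \<Rightarrow> real) \<Longrightarrow> L (p, q) = p * L (1,0) + q * L (0,1)"
proof -
  assume lin: "linear L"
  have "L (p, q) = L (p *\<^sub>R (1,0) + q *\<^sub>R (0,1))" by simp
  also have "\<dots> = p * L (1,0) + q * L (0,1)"
    by (simp only: linear_add[OF lin] linear_scale[OF lin] real_scaleR_def)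
  finally show ?thesis .
qed

lemma dbar_deriv:
  fixes u D :: "real \<Rightarrow> real" and Dbar :: "real \<times> real \<Rightarrow> real"
  assumes sD: "smooth_fun Dbar" and sym: "\<And>a b. Dbar (a,b) = Dbar (b,a)"
    and dd: "\<And>v. Dbar (v,v) = D v" and su: "sm u"
  shows "deriv (\<lambda>y. D (u y)) x = 2 * deriv (\<lambda>t. Dbar (u x, sc u x 1 t)) 0"
proof -
  have "Ck (Suc 0) Dbar" using sD unfolding smooth_fun_def by blast
  then obtain G' where G': "\<And>p. (Dbar has_derivative G' p) (at p)" by auto
  define L where "L = G' (u x, u x)"
  have lin: "linear L" unfolding L_def using has_derivative_linear[OF G'] .
  have sw: "((\<lambda>p. (snd p, fst p)) has_derivative (\<lambda>v. (snd v, fst v))) (at p)" for p :: "real \<times> real"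
    by (auto intro!: derivative_eq_intros)
  have "((\<lambda>p. Dbar (snd p, fst p)) has_derivative (\<lambda>v. G' (snd (u x, u x), fst (u x, u x)) (snd v, fst v))) (at (u x, u x))"
    using has_derivative_compose[OF sw[of "(u x, u x)"] G'] by simp
  moreover have "(\<lambda>p. Dbar (snd p, fst p)) = Dbar"
  proof (rule ext)
    fix p :: "real \<times> real"
    show "Dbar (snd p, fst p) = Dbar p" using sym[of "snd p" "fst p"] by simp
  qed
  ultimately have "(Dbar has_derivative (\<lambda>v. L (snd v, fst v))) (at (u x, u x))" unfolding L_def by simp
  hence "(\<lambda>v. L (snd v, fst v)) = L" using G'[of "(u x, u x)"] unfolding L_def by (rule has_derivative_unique)
  hence Lsym: "L (1,0) = L (0,1)" using fun_cong[of "\<lambda>v. L (snd v, fst v)" L "(0,1)"] by simp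
  define c where "c = deriv u x"
  have du: "(u has_derivative (\<lambda>s. c * s)) (at x)"
    using sm_DERIV[OF su, of x] unfolding has_field_derivative_def c_def by (simp add: su)
  have dsc: "(sc u x 1 has_derivative (\<lambda>s. c * s)) (at 0)"
    using sm_DERIV[OF sm_sc[OF su, of x 1], of 0] unfolding has_field_derivative_def c_def by (simp add: su)
  have p1: "((\<lambda>t. (u x, sc u x 1 t)) has_derivative (\<lambda>s. (0, c * s))) (at 0)"
    using dsc by (auto intro!: derivative_eq_intros)
  have "((\<lambda>t. Dbar (u x, sc u x 1 t)) has_derivative (\<lambda>s. G' (u x, sc u x 1 0) (0, c * s))) (at 0)"
    using has_derivative_compose[OF p1 G'] by simp
  hence "((\<lambda>t. Dbar (u x, sc u x 1 t)) has_derivative (\<lambda>s. L (0, c * s))) (at 0)"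
    unfolding L_def by simp
  moreover have "(\<lambda>s. L (0, c * s)) = (*) (c * L (0,1))"
  proof (rule ext)
    fix s show "L (0, c * s) = c * L (0,1) * s" using lin2[OF lin, of 0 "c * s"] by simp
  qed
  ultimately have "((\<lambda>t. Dbar (u x, sc u x 1 t)) has_real_derivative c * L (0,1)) (at 0)"
    unfolding has_field_derivative_def by simp
  hence g1: "deriv (\<lambda>t. Dbar (u x, sc u x 1 t)) 0 = c * L (0,1)" by (rule DERIV_imp_deriv)
  have p2: "((\<lambda>y. (u y, u y)) has_derivative (\<lambda>s. (c * s, c * s))) (at x)"
    using du by (auto intro!: derivative_eq_intros)
  have "((\<lambda>y. Dbar (u y, u y)) has_derivative (\<lambda>s. G' (u x, u x) (c * s, c * s))) (at x)"
    using has_derivative_compose[OF p2 G'] by simp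
  moreover have "(\<lambda>s. G' (u x, u x) (c * s, c * s)) = (*) (2 * c * L (0,1))"
  proof (rule ext)
    fix s show "G' (u x, u x) (c * s, c * s) = 2 * c * L (0,1) * s"
      using lin2[OF lin, of "c * s" "c * s"] Lsym by (simp add: L_def[symmetric] algebra_simps)
  qed
  moreover have "(\<lambda>y. Dbar (u y, u y)) = (\<lambda>y. D (u y))" using dd by simp
  ultimately have "((\<lambda>y. D (u y)) has_real_derivative 2 * c * L (0,1)) (at x)"
    unfolding has_field_derivative_def by simp
  hence "deriv (\<lambda>y. D (u y)) x = 2 * c * L (0,1)" by (rule DERIV_imp_deriv)
  thus ?thesis using g1 by simp
qed


lemma calc:
  fixes u f g :: "real \<Rightarrow> real" and \<kappa> \<theta>2 x h :: real
  assumes su: "sm u" and sf: "sm f" and sg: "sm g"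
  defines "FF \<equiv> (\<lambda>t. 1/2 * ((f (u x) + deriv f (u x) * (\<kappa>/2 * (sc u x 1 t - (u x)) + (1-\<kappa>)/4 * (sc u x 1 t - sc u x (-1) t)) + \<theta>2/2 * deriv (deriv f) (u x) * ((\<kappa>/2 * (sc u x 1 t - (u x)) + (1-\<kappa>)/4 * (sc u x 1 t - sc u x (-1) t)) * (\<kappa>/2 * (sc u x 1 t - (u x)) + (1-\<kappa>)/4 * (sc u x 1 t - sc u x (-1) t)))) + (cp f (sc u x 1) t + cp (deriv f) (sc u x 1) t * (\<kappa>/2 * ((u x) - sc u x 1 t) - (1-\<kappa>)/4 * (sc u x 2 t - (u x))) + \<theta>2/2 * cp (deriv (deriv f)) (sc u x 1) t * ((\<kappa>/2 * ((u x) - sc u x 1 t) - (1-\<kappa>)/4 * (sc u x 2 t - (u x))) * (\<kappa>/2 * ((u x) - sc u x 1 t) - (1-\<kappa>)/4 * (sc u x 2 t - (u x)))))))"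
  defines "PP \<equiv> (\<lambda>t. g t * ((1-\<kappa>) * (sc u x 1 t - (u x) - 1/4 * (sc u x 2 t - (u x)) - 1/4 * (sc u x 1 t - sc u x (-1) t))))"
  shows "2 * (deriv FF 0 * h + deriv (deriv (deriv FF)) 0 / 6 * h ^ 3)
     - (PP 0 + deriv (deriv PP) 0 / 2 * h ^ 2 + deriv (deriv (deriv (deriv PP))) 0 / 24 * h ^ 4)
   = h * (deriv f (u x) * deriv u x
             + 1/4 * ( (\<kappa> - 1/3) * deriv f (u x) * deriv (deriv (deriv u)) x
                     + (\<kappa> + \<theta>2 - 1) * deriv (deriv f) (u x) * deriv u x * deriv (deriv u) x
                     + 1/2 * (\<theta>2 - 2/3) * deriv (deriv (deriv f)) (u x) * (deriv u x)^3 ) * h^2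
             - (\<kappa> - 1) / 8 * ( 2 * deriv g 0 * deriv (deriv (deriv u)) x
                                + g 0 * deriv (deriv (deriv (deriv u))) x ) * h^3)"
  unfolding FF_def PP_def
  using su sf sg
  apply (simp add: sm_deriv)
  apply (simp add: field_simps eval_nat_numeral)
  done


lemma cdx_half: "h \<noteq> 0 \<Longrightarrow> h / 2 * cdx h u y = (u (y + h) - u (y - h)) / 4"
  unfolding cdx_def by (simp add: field_simps)

lemma bridge:
  fixes u f :: "real \<Rightarrow> real" and Dbar :: "real \<times> real \<Rightarrow> real" and \<kappa> \<theta>2 x h :: real
  assumes hne: "h \<noteq> 0" and sym: "\<And>a b. Dbar (a, b) = Dbar (b, a)"
  defines "FF \<equiv> (\<lambda>t. 1/2 * ((f (u x) + deriv f (u x) * (\<kappa>/2 * (sc u x 1 t - (u x)) + (1-\<kappa>)/4 * (sc u x 1 t - sc u x (-1) t)) + \<theta>2/2 * deriv (deriv f) (u x) * ((\<kappa>/2 * (sc u x 1 t - (u x)) + (1-\<kappa>)/4 * (sc u x 1 t - sc u x (-1) t)) * (\<kappa>/2 * (sc u x 1 t - (u x)) + (1-\<kappa>)/4 * (sc u x 1 t - sc u x (-1) t)))) + (cp f (sc u x 1) t + cp (deriv f) (sc u x 1) t * (\<kappa>/2 * ((u x) - sc u x 1 t) - (1-\<kappa>)/4 * (sc u x 2 t - (u x))) + \<theta>2/2 * cp (deriv (deriv f)) (sc u x 1) t * ((\<kappa>/2 * ((u x) - sc u x 1 t) - (1-\<kappa>)/4 * (sc u x 2 t - (u x))) * (\<kappa>/2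 * ((u x) - sc u x 1 t) - (1-\<kappa>)/4 * (sc u x 2 t - (u x)))))))"
  defines "PP \<equiv> (\<lambda>t. Dbar (u x, sc u x 1 t) * ((1-\<kappa>) * (sc u x 1 t - (u x) - 1/4 * (sc u x 2 t - (u x)) - 1/4 * (sc u x 1 t - sc u x (-1) t))))"
  shows "h * qfsr_err \<kappa> 0 \<theta>2 f Dbar u x h = FF h - FF (-h) - (PP h + PP (-h)) / 2"
proof -
  have s1: "Dbar (u (x - h), u x) = Dbar (u x, u (x - h))" by (rule sym)
  have e: "x + h + h = x + 2*h" "x + h - h = x" "x - h + h = x" "x - h - h = x - 2*h"
     "x - h + h + h = x + h" "x - h + h - h = x - h" "x + 1*h = x + h" "x + (-1)*h = x - h"
     "x + 1*(-h) = x - h" "x + (-1)*(-h) = x + h" "x + 2*(-h) = x - 2*h" by simp_all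
  have q: "h * qfsr_err \<kappa> 0 \<theta>2 f Dbar u x h = qfsr_flux \<kappa> 0 \<theta>2 f Dbar h u x - qfsr_flux \<kappa> 0 \<theta>2 f Dbar h u (x - h)"
    unfolding qfsr_err_def using hne by simp
  show ?thesis
    unfolding q FF_def PP_def qfsr_flux_def Let_def cdx_half[OF hne] sc_def cp_def
    apply (simp only: e s1 mult_zero_left add_0_right)
    apply (simp add: field_simps power2_eq_square)
    done
qed


lemma lincomb:
  fixes A P B Q E T a b :: real
  assumes "\<bar>A - P\<bar> \<le> a" "\<bar>B - Q\<bar> \<le> b" "E = A - B / 2" "P - Q / 2 = T"
  shows "\<bar>E - T\<bar> \<le> a + b / 2"
  using assms unfolding abs_le_iff by linarith

theorem mainTheorem6:
  fixes u f D :: "real \<Rightarrow> real" and Dbar :: "real \<times> real \<Rightarrow> real"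
    and \<kappa> \<kappa>3 \<theta>2 x :: real
  assumes "smooth_fun u" and "smooth_fun f" and "smooth_fun D" and "smooth_fun Dbar"
    and "\<And>a b. Dbar (a, b) = Dbar (b, a)"
    and "\<And>v. Dbar (v, v) = D v"
    and "\<kappa>3 = 0"
  shows "(\<lambda>h. qfsr_err \<kappa> \<kappa>3 \<theta>2 f Dbar u x h
           - ( deriv f (u x) * deriv u x
             + 1/4 * ( (\<kappa> - 1/3) * deriv f (u x) * (deriv ^^ 3) u x
                     + (\<kappa> + \<theta>2 - 1) * (deriv ^^ 2) f (u x) * deriv u x * (deriv ^^ 2) u x
                     + 1/2 * (\<theta>2 - 2/3) * (deriv ^^ 3) f (u x) * (deriv u x)^3 ) * h^2
             - (\<kappa> - 1) / 8 * ( deriv (\<lambda>y. D (u y)) x * (deriv ^^ 3) u x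
                                + D (u x) * (deriv ^^ 4) u x ) * h^3 ))
         \<in> O[at_right 0](\<lambda>h. h^4)
       \<and> (\<kappa> = 1/3 \<and> \<theta>2 = 2/3 \<longrightarrow>
          (\<lambda>h. qfsr_err \<kappa> \<kappa>3 \<theta>2 f Dbar u x h - deriv f (u x) * deriv u x)
            \<in> O[at_right 0](\<lambda>h. h^3))"
proof -
  have su: "sm u" using assms(1) by (rule smooth_sm)
  have sf: "sm f" using assms(2) by (rule smooth_sm)
  define g where "g = (\<lambda>t. Dbar (u x, sc u x 1 t))"
  have sg: "sm g" unfolding g_def using sm2[OF assms(4) sm_const sm_sc[OF su]] by simp
  have g0: "g 0 = D (u x)" unfolding g_def using assms(6) by simp
  have gd: "deriv (\<lambda>y. D (u y)) x = 2 * deriv g 0"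
    unfolding g_def by (rule dbar_deriv[OF assms(4) assms(5) assms(6) su])
  define FF where "FF = (\<lambda>t. 1/2 * ((f (u x) + deriv f (u x) * (\<kappa>/2 * (sc u x 1 t - (u x)) + (1-\<kappa>)/4 * (sc u x 1 t - sc u x (-1) t)) + \<theta>2/2 * deriv (deriv f) (u x) * ((\<kappa>/2 * (sc u x 1 t - (u x)) + (1-\<kappa>)/4 * (sc u x 1 t - sc u x (-1) t)) * (\<kappa>/2 * (sc u x 1 t - (u x)) + (1-\<kappa>)/4 * (sc u x 1 t - sc u x (-1) t)))) + (cp f (sc u x 1) t + cp (deriv f) (sc u x 1) t * (\<kappa>/2 * ((u x) - sc u x 1 t) - (1-\<kappa>)/4 * (sc u x 2 t - (u x))) + \<theta>2/2 * cp (deriv (deriv f)) (sc u x 1) t * ((\<kappa>/2 * ((u x) - sc u x 1 t) - (1-\<kappa>)/4 * (sc u x 2 t - (u x))) * (\<kappa>/2 * ((u x) - sc u x 1 t) - (1-\<kappa>)/4 * (sc u x 2 t - (u x)))))))"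
  define PP where "PP = (\<lambda>t. g t * ((1-\<kappa>) * (sc u x 1 t - (u x) - 1/4 * (sc u x 2 t - (u x)) - 1/4 * (sc u x 1 t - sc u x (-1) t))))"
  have smF: "sm FF" unfolding FF_def using su sf by simp
  have smP: "sm PP" unfolding PP_def using su sg by simp
  obtain M1 r1 where r1: "r1 > 0" "\<And>h. \<bar>h\<bar> < r1 \<Longrightarrow>
     \<bar>FF h - FF (-h) - 2 * (deriv FF 0 * h + deriv (deriv (deriv FF)) 0 / 6 * h ^ 3)\<bar> \<le> M1 * \<bar>h\<bar> ^ 5"
    using taylor_odd[OF smF] by blast
  obtain M2 r2 where r2: "r2 > 0" "\<And>h. \<bar>h\<bar> < r2 \<Longrightarrow>
     \<bar>PP h + PP (-h) - 2 * (PP 0 + deriv (deriv PP) 0 / 2 * h ^ 2 + deriv (deriv (deriv (deriv PP))) 0 / 24 * h ^ 4)\<bar> \<le> M2 * \<bar>h\<bar> ^ 5"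
    using taylor_even[OF smP] by blast
  have conv: "(deriv ^^ 3) u = deriv (deriv (deriv u))" "(deriv ^^ 2) f = deriv (deriv f)" "(deriv ^^ 2) u = deriv (deriv u)"
    "(deriv ^^ 3) f = deriv (deriv (deriv f))" "(deriv ^^ 4) u = deriv (deriv (deriv (deriv u)))"
    by (simp_all add: eval_nat_numeral)
  define T where "T = (\<lambda>h::real. deriv f (u x) * deriv u x
             + 1/4 * ( (\<kappa> - 1/3) * deriv f (u x) * (deriv ^^ 3) u x
                     + (\<kappa> + \<theta>2 - 1) * (deriv ^^ 2) f (u x) * deriv u x * (deriv ^^ 2) u x
                     + 1/2 * (\<theta>2 - 2/3) * (deriv ^^ 3) f (u x) * (deriv u x)^3 ) * h^2
             - (\<kappa> - 1) / 8 * ( deriv (\<lambda>y. D (u y)) x * (deriv ^^ 3) u x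
                                + D (u x) * (deriv ^^ 4) u x ) * h^3)"
  have cal: "2 * (deriv FF 0 * h + deriv (deriv (deriv FF)) 0 / 6 * h ^ 3)
     - (PP 0 + deriv (deriv PP) 0 / 2 * h ^ 2 + deriv (deriv (deriv (deriv PP))) 0 / 24 * h ^ 4)
     = h * T h" for h
  proof -
    have "2 * (deriv FF 0 * h + deriv (deriv (deriv FF)) 0 / 6 * h ^ 3)
     - (PP 0 + deriv (deriv PP) 0 / 2 * h ^ 2 + deriv (deriv (deriv (deriv PP))) 0 / 24 * h ^ 4)
     = h * (deriv f (u x) * deriv u x
             + 1/4 * ( (\<kappa> - 1/3) * deriv f (u x) * deriv (deriv (deriv u)) x
                     + (\<kappa> + \<theta>2 - 1) * deriv (deriv f) (u x) * deriv u x * deriv (deriv u) x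
                     + 1/2 * (\<theta>2 - 2/3) * deriv (deriv (deriv f)) (u x) * (deriv u x)^3 ) * h^2
             - (\<kappa> - 1) / 8 * ( 2 * deriv g 0 * deriv (deriv (deriv u)) x
                                + g 0 * deriv (deriv (deriv (deriv u))) x ) * h^3)"
      unfolding FF_def PP_def by (rule calc[OF su sf sg])
    thus ?thesis unfolding T_def conv gd g0 by simp
  qed
  define M where "M = M1 + M2 / 2"
  define r where "r = min r1 r2"
  have rpos: "r > 0" unfolding r_def using r1 r2 by simp
  have key: "\<bar>qfsr_err \<kappa> \<kappa>3 \<theta>2 f Dbar u x h - T h\<bar> \<le> M * h ^ 4" if h: "0 < h" "h < r" for h
  proof -
    have b: "h * qfsr_err \<kappa> \<kappa>3 \<theta>2 f Dbar u x h = FF h - FF (-h) - (PP h + PP (-h)) / 2"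
      unfolding FF_def PP_def g_def assms(7) by (rule bridge) (use h assms(5) in auto)
    have o1: "\<bar>FF h - FF (-h) - 2 * (deriv FF 0 * h + deriv (deriv (deriv FF)) 0 / 6 * h ^ 3)\<bar> \<le> M1 * h ^ 5"
      using r1(2)[of h] h unfolding r_def by simp
    have o2: "\<bar>PP h + PP (-h) - 2 * (PP 0 + deriv (deriv PP) 0 / 2 * h ^ 2 + deriv (deriv (deriv (deriv PP))) 0 / 24 * h ^ 4)\<bar> \<le> M2 * h ^ 5"
      using r2(2)[of h] h unfolding r_def by simp
    have "\<bar>h * (qfsr_err \<kappa> \<kappa>3 \<theta>2 f Dbar u x h - T h)\<bar> \<le> M * h ^ 5"
    proof -
      have c2: "2 * (deriv FF 0 * h + deriv (deriv (deriv FF)) 0 / 6 * h ^ 3)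
         - 2 * (PP 0 + deriv (deriv PP) 0 / 2 * h ^ 2 + deriv (deriv (deriv (deriv PP))) 0 / 24 * h ^ 4) / 2
         = h * T h"
        proof -
          have e2: "\<And>Q::real. 2 * Q / 2 = Q" by simp
          show ?thesis unfolding e2 by (rule cal)
        qed
      have "\<bar>h * qfsr_err \<kappa> \<kappa>3 \<theta>2 f Dbar u x h - h * T h\<bar> \<le> M1 * h ^ 5 + M2 * h ^ 5 / 2"
        by (rule lincomb[OF o1 o2 b c2])
      thus ?thesis unfolding M_def by (simp add: algebra_simps)
    qed
    moreover have "\<bar>h * qfsr_err \<kappa> \<kappa>3 \<theta>2 f Dbar u x h - h * T h\<bar> = h * \<bar>qfsr_err \<kappa> \<kappa>3 \<theta>2 f Dbar u x h - T h\<bar>"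
      using h by (simp add: abs_mult right_diff_distrib[symmetric])
    moreover have "M * h ^ 5 = h * (M * h ^ 4)" by (simp add: eval_nat_numeral)
    ultimately have "h * \<bar>qfsr_err \<kappa> \<kappa>3 \<theta>2 f Dbar u x h - T h\<bar> \<le> h * (M * h ^ 4)" by simp
    thus ?thesis using h by simp
  qed
  have part1: "(\<lambda>h. qfsr_err \<kappa> \<kappa>3 \<theta>2 f Dbar u x h - T h) \<in> O[at_right 0](\<lambda>h. h^4)"
  proof (rule bigoI[where c = M])
    show "eventually (\<lambda>h. norm (qfsr_err \<kappa> \<kappa>3 \<theta>2 f Dbar u x h - T h) \<le> M * norm (h ^ 4)) (at_right 0)"
      using eventually_at_right_real[OF rpos]
      by (rule eventually_mono) (use key in auto)
  qed
  have part2: "(\<lambda>h. qfsr_err \<kappa> \<kappa>3 \<theta>2 f Dbar u x h - deriv f (u x) * deriv u x) \<in> O[at_right 0](\<lambda>h. h^3)"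
    if k: "\<kappa> = 1/3 \<and> \<theta>2 = 2/3"
  proof -
    define K where "K = (\<kappa> - 1) / 8 * ( deriv (\<lambda>y. D (u y)) x * (deriv ^^ 3) u x + D (u x) * (deriv ^^ 4) u x )"
    have TK: "T h - deriv f (u x) * deriv u x = - K * h ^ 3" for h
    proof -
      have k1: "\<kappa> = 1/3" and k2: "\<theta>2 = 2/3" using k by auto
      show ?thesis unfolding T_def K_def k1 k2 by simp
    qed
    have bnd: "\<bar>qfsr_err \<kappa> \<kappa>3 \<theta>2 f Dbar u x h - deriv f (u x) * deriv u x\<bar> \<le> (\<bar>M\<bar> + \<bar>K\<bar>) * h ^ 3"
      if h: "0 < h" "h < min r 1" for h
    proof -
      have "\<bar>qfsr_err \<kappa> \<kappa>3 \<theta>2 f Dbar u x h - T h\<bar> \<le> M * h ^ 4" using key[of h] h by simp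
      moreover have "M * h ^ 4 \<le> \<bar>M\<bar> * h ^ 3"
      proof -
        have "h ^ 4 \<le> h ^ 3" using h by (simp add: power_decreasing)
        hence "\<bar>M\<bar> * h ^ 4 \<le> \<bar>M\<bar> * h ^ 3" by (simp add: mult_left_mono)
        moreover have "M * h ^ 4 \<le> \<bar>M\<bar> * h ^ 4" using h by (simp add: mult_right_mono)
        ultimately show ?thesis by linarith
      qed
      moreover have "\<bar>K * h ^ 3\<bar> = \<bar>K\<bar> * h ^ 3" using h by (simp add: abs_mult)
      ultimately show ?thesis using TK[of h] by (simp add: algebra_simps abs_le_iff) linarith?
    qed
    have mr: "(0::real) < min r 1" using rpos by simp
    show ?thesis
    proof (rule bigoI[where c = "\<bar>M\<bar> + \<bar>K\<bar>"])
      show "eventually (\<lambda>h. norm (qfsr_err \<kappa> \<kappa>3 \<theta>2 f Dbar u x h - deriv f (u x) * deriv u x) \<le> (\<bar>M\<bar> + \<bar>K\<bar>) * norm (h ^ 3)) (at_right 0)"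
        using eventually_at_right_real[OF mr]
        by (rule eventually_mono) (use bnd in auto)
    qed
  qed
  show ?thesis using part1 part2 unfolding T_def by simp
qed

end
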